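(* Let $\mathcal{A}$ be a complete topological ring and let $\varphi\colon\mathcal{A}\rightarrow\mathcal{B}$ be a complete topological $\mathcal{A}$-algebra. Let $\mathfrak{S}=\mathrm{Spf}(\mathcal{A})$ and let $f\colon\mathfrak{X}=\mathrm{Spf}(\mathcal{B})\rightarrow\mathfrak{S}$ be the corresponding affine ind-scheme and affine ind-$\mathfrak{S}$-scheme. Then actions $\mathbb{G}_{a,\mathfrak{S}}\widehat{\times}_{\mathfrak{S}}\mathfrak{X}\rightarrow\mathfrak{X}$ of the additive group ind-scheme $\mathbb{G}_{a,\mathfrak{S}}$ on $\mathfrak{X}$ are in one-to-one correspondence with topologically integrable iterated higher $\mathcal{A}$-derivations $D=\{D^{(i)}\}_{i\geq 0}$ of $\mathcal{B}$.
   Context: Conventions: all topological abelian groups, rings and modules are linearly topologized and admit a countable fundamental system of neighbourhoods of $0$ consisting of open subgroups (resp. open ideals, open submodules); homomorphisms of topological rings/modules are continuous homomorphisms. The separated completion of a topological ring $\mathcal{A}$ is $\widehat{\mathcal{A}}=\varprojlim_{\mathfrak{a}}\mathcal{A}/\mathfrak{a}$ ($\mathfrak{a}$ running over open ideals, each quotient discrete) with the inverse limit topology; $\mathcal{A}$ is complete if the canonical map $\mathcal{A}\to\widehat{\mathcal{A}}$ is an isomorphism of topological rings. A complete topological $\mathcal{A}$-algebra is a complete topological ring $\mathcal{B}$ with a continuous ring homomorphism $\mathcal{A}\to\mathcal{B}$. Restricted power series: for a complete topological ring $\mathcal{B}$, $\mathcal{B}\{T_1,\dots,T_r\}$ is the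 subring of $\mathcal{B}[[T_1,\dots,T_r]]$ of series $\sum_I b_IT^I$ whose coefficients converge to $0$ (for every open ideal $\mathfrak{b}$, all but finitely many $b_I$ lie in $\mathfrak{b}$), with the topology whose fundamental system of open ideals consists of the series with all coefficients in $\mathfrak{b}$, $\mathfrak{b}$ open in $\mathcal{B}$; equivalently $\mathcal{B}\{T_1,\dots,T_r\}=\varprojlim_{\mathfrak{b}}(\mathcal{B}/\mathfrak{b})[T_1,\dots,T_r]$. Affine ind-schemes: for a complete topological ring $\mathcal{A}$, $\mathrm{Spf}(\mathcal{A})$ is the set of open prime ideals of $\mathcal{A}$ with the topology induced by the Zariski topology of $\mathrm{Spec}(\mathcal{A})$, equipped with the sheaf of topological rings $\mathcal{O}_{\mathrm{Spf}(\mathcal{A})}=\varprojlim_n (j_n)_*\mathcal{O}_{\mathrm{Spec}(\mathcal{A}/\mathfrak{a}_n)}$ (restricted to $\mathrm{Spf}(\mathcal{A})$), where $(\mathfrak{a}_n)$ is a fundamental system of open ideals and $j_n\colon\mathrm{Spec}(\mathcal{A}/\mathfrak{a}_n)\to\mathrm{Spec}(\mathcal{A})$ the closed immersions; it is a locally topologically ringed space with global sections $\mathcal{A}$. Affine ind-schemes are locally topologically ringed spaces isomorphic to some $\mathrm{Spf}(\mathcal{A})$, and morphisms between them are the morphisms $\mathrm{Spf}(\varphi)$ induced by continuous ring homomorphisms $\varphi$; for $\mathfrak{S}=\mathrm{Spf}(\mathcal{A})$, the category of affine ind-$\mathfrak{S}$-schemes is thereby anti-equivalent to the category of complete topological $\mathcal{A}$-algebras,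 and the fibre product $\mathrm{Spf}(\mathcal{B})\widehat{\times}_{\mathfrak{S}}\mathrm{Spf}(\mathcal{B}')$ is $\mathrm{Spf}(\mathcal{B}\widehat{\otimes}_{\mathcal{A}}\mathcal{B}')$, where $\widehat{\otimes}$ is the completed tensor product (separated completion of $\mathcal{B}\otimes_{\mathcal{A}}\mathcal{B}'$ for the topology generated by $U\otimes\mathcal{B}'+\mathcal{B}\otimes V$, $U,V$ open ideals). The additive group ind-scheme $\mathbb{G}_{a,\mathfrak{S}}$ is $\mathrm{Spf}(\mathcal{A}\{T\})$ with group law $\mathrm{Spf}(m)$, $m\colon\mathcal{A}\{T\}\to\mathcal{A}\{T,T'\}$, $T\mapsto T+T'$, and neutral section $\mathrm{Spf}(\epsilon)$, $\epsilon\colon\mathcal{A}\{T\}\to\mathcal{A}$, $T\mapsto 0$; one has $\mathbb{G}_{a,\mathfrak{S}}\widehat{\times}_{\mathfrak{S}}\mathrm{Spf}(\mathcal{B})\cong\mathrm{Spf}(\mathcal{B}\{T\})$. An action is a morphism of affine ind-$\mathfrak{S}$-schemes $\mu\colon\mathbb{G}_{a,\mathfrak{S}}\widehat{\times}_{\mathfrak{S}}\mathfrak{X}\to\mathfrak{X}$ satisfying $\mu\circ(\mathrm{id}\times\mu)=\mu\circ(m\times\mathrm{id})$ and $\mu\circ(\mathrm{Spf}(\epsilon)\times\mathrm{id})=$ the canonical isomorphism $\mathfrak{S}\widehat{\times}_{\mathfrak{S}}\mathfrak{X}\cong\mathfrak{X}$. Iterated higher derivations: a continuous iterated higher $\mathcal{A}$-derivation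 of $\mathcal{B}$ is a family $D=\{D^{(i)}\}_{i\ge0}$ of continuous $\mathcal{A}$-module homomorphisms $D^{(i)}\colon\mathcal{B}\to\mathcal{B}$ with $D^{(0)}=\mathrm{id}_{\mathcal{B}}$, $D^{(i)}(bb')=\sum_{j=0}^iD^{(j)}(b)D^{(i-j)}(b')$, and $D^{(i)}\circ D^{(j)}=\binom{i+j}{i}D^{(i+j)}$. It is topologically integrable if the sequence $(D^{(i)})_{i}$ converges continuously to $0$: for every $b\in\mathcal{B}$ and every open ideal $\mathfrak{b}'$ of $\mathcal{B}$ there exist an open ideal $\mathfrak{b}$ and $n_0$ with $D^{(n)}(b+\mathfrak{b})\subseteq\mathfrak{b}'$ for all $n\ge n_0$. *)

theory Defs
  imports Main
begin

text \<open>Linearly topologized commutative rings with a countable fundamental system of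
  open ideals, represented by a sequence N of ideals (filter base).\<close>

definition is_ideal :: "'a::comm_ring_1 set \<Rightarrow> bool" where
  "is_ideal J \<longleftrightarrow> 0 \<in> J \<and> (\<forall>x\<in>J. \<forall>y\<in>J. x + y \<in> J) \<and> (\<forall>r. \<forall>x\<in>J. r * x \<in> J)"

definition fund_system :: "(nat \<Rightarrow> 'a::comm_ring_1 set) \<Rightarrow> bool" where
  "fund_system N \<longleftrightarrow> (\<forall>n. is_ideal (N n)) \<and> (\<forall>m n. \<exists>k. N k \<subseteq> N m \<inter> N n)"

definition open_ideals :: "(nat \<Rightarrow> 'a::comm_ring_1 set) \<Rightarrow> 'a set set" where
  "open_ideals N = {J. is_ideal J \<and> (\<exists>n. N n \<subseteq> J)}"

text \<open>Complete: the canonical map to the inverse limit of the discrete quotients A/J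
  (J open) is bijective; elements of the inverse limit are written via representatives.\<close>
definition complete_ring :: "(nat \<Rightarrow> 'a::comm_ring_1 set) \<Rightarrow> bool" where
  "complete_ring N \<longleftrightarrow> fund_system N \<and>
     \<Inter>(open_ideals N) = {0} \<and>
     (\<forall>x :: 'a set \<Rightarrow> 'a.
        (\<forall>J\<in>open_ideals N. \<forall>J'\<in>open_ideals N. J' \<subseteq> J \<longrightarrow> x J' - x J \<in> J) \<longrightarrow>
        (\<exists>y. \<forall>J\<in>open_ideals N. y - x J \<in> J))"

definition is_ring_hom :: "('a::comm_ring_1 \<Rightarrow> 'b::comm_ring_1) \<Rightarrow> bool" where
  "is_ring_hom f \<longleftrightarrow> f 1 = 1 \<and> (\<forall>x y. f (x + y) = f x + f y) \<and> (\<forall>x y. f (x * y) = f x * f y)"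

text \<open>Continuity for linear topologies (neighbourhoods of a are a + J, J open).\<close>
definition cont_map ::
  "(nat \<Rightarrow> 'a::comm_ring_1 set) \<Rightarrow> (nat \<Rightarrow> 'b::comm_ring_1 set) \<Rightarrow> ('a \<Rightarrow> 'b) \<Rightarrow> bool" where
  "cont_map NA NB f \<longleftrightarrow>
     (\<forall>a. \<forall>J\<in>open_ideals NB. \<exists>J'\<in>open_ideals NA. \<forall>x\<in>J'. f (a + x) - f a \<in> J)"

subsection \<open>Restricted power series B{T}, B{T,T'} (coefficient functions)\<close>

definition restricted :: "(nat \<Rightarrow> 'b::comm_ring_1 set) \<Rightarrow> ('i \<Rightarrow> 'b) \<Rightarrow> bool" where
  "restricted NB c \<longleftrightarrow> (\<forall>J\<in>open_ideals NB. finite {i. c i \<notin> J})"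

definition ser_const :: "'b::comm_ring_1 \<Rightarrow> nat \<Rightarrow> 'b" where
  "ser_const b = (\<lambda>i. if i = 0 then b else 0)"

definition ser_add :: "(nat \<Rightarrow> 'b::comm_ring_1) \<Rightarrow> (nat \<Rightarrow> 'b) \<Rightarrow> nat \<Rightarrow> 'b" where
  "ser_add c d = (\<lambda>i. c i + d i)"

definition ser_mult :: "(nat \<Rightarrow> 'b::comm_ring_1) \<Rightarrow> (nat \<Rightarrow> 'b) \<Rightarrow> nat \<Rightarrow> 'b" where
  "ser_mult c d = (\<lambda>i. \<Sum>j\<le>i. c j * d (i - j))"

text \<open>Continuity of a map B \<rightarrow> B{T}: B{T} has the open ideals
  {series with all coefficients in J}, J open in B.\<close>
definition cont_to_series ::
  "(nat \<Rightarrow> 'b::comm_ring_1 set) \<Rightarrow> ('b \<Rightarrow> nat \<Rightarrow> 'b) \<Rightarrow> bool" where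
  "cont_to_series NB f \<longleftrightarrow>
     (\<forall>b. \<forall>J\<in>open_ideals NB. \<exists>J'\<in>open_ideals NB. \<forall>x\<in>J'. \<forall>i. f (b + x) i - f b i \<in> J)"

text \<open>Comorphisms, via the anti-equivalence and
  G_a \<times> G_a \<times> Spf B = Spf B{T,T'} (index (i,j) = coefficient of T^i T'^j):
  (id \<times> \<mu>)^*  : B{T} \<rightarrow> B{T,T'},  sum f_i T^i \<mapsto> sum_i T^i \<mu>^*(f_i)(T');
  (m \<times> id)^*  : B{T} \<rightarrow> B{T,T'},  T \<mapsto> T + T';
  (\<epsilon> \<times> id)^* : B{T} \<rightarrow> B,       T \<mapsto> 0.\<close>

definition id_times_comor :: "('b::comm_ring_1 \<Rightarrow> nat \<Rightarrow> 'b) \<Rightarrow> (nat \<Rightarrow> 'b) \<Rightarrow> nat \<times> nat \<Rightarrow> 'b" where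
  "id_times_comor \<mu> c = (\<lambda>(i, j). \<mu> (c i) j)"

definition add_times_id :: "(nat \<Rightarrow> 'b::comm_ring_1) \<Rightarrow> nat \<times> nat \<Rightarrow> 'b" where
  "add_times_id c = (\<lambda>(i, j). of_nat ((i + j) choose i) * c (i + j))"

definition eps_times_id :: "(nat \<Rightarrow> 'b::comm_ring_1) \<Rightarrow> 'b" where
  "eps_times_id c = c 0"

text \<open>An action G_a \<times> Spf B \<rightarrow> Spf B, given by its comorphism \<mu> : B \<rightarrow> B{T}, a continuous
  homomorphism of A-algebras, satisfying the action axioms.\<close>
definition is_Ga_action ::
  "(nat \<Rightarrow> 'a::comm_ring_1 set) \<Rightarrow> (nat \<Rightarrow> 'b::comm_ring_1 set) \<Rightarrow> ('a \<Rightarrow> 'b)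
   \<Rightarrow> ('b \<Rightarrow> nat \<Rightarrow> 'b) \<Rightarrow> bool" where
  "is_Ga_action NA NB \<phi> \<mu> \<longleftrightarrow>
     (\<forall>b. restricted NB (\<mu> b)) \<and>
     \<mu> 1 = ser_const 1 \<and>
     (\<forall>b b'. \<mu> (b + b') = ser_add (\<mu> b) (\<mu> b')) \<and>
     (\<forall>b b'. \<mu> (b * b') = ser_mult (\<mu> b) (\<mu> b')) \<and>
     (\<forall>a. \<mu> (\<phi> a) = ser_const (\<phi> a)) \<and>
     cont_to_series NB \<mu> \<and>
     (\<forall>b. id_times_comor \<mu> (\<mu> b) = add_times_id (\<mu> b)) \<and>
     (\<forall>b. eps_times_id (\<mu> b) = b)"

definition iter_higher_deriv ::
  "(nat \<Rightarrow> 'b::comm_ring_1 set) \<Rightarrow> ('a::comm_ring_1 \<Rightarrow> 'b) \<Rightarrow> (nat \<Rightarrow> 'b \<Rightarrow> 'b) \<Rightarrow> bool" where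
  "iter_higher_deriv NB \<phi> D \<longleftrightarrow>
     (\<forall>i. (\<forall>b b'. D i (b + b') = D i b + D i b') \<and>
          (\<forall>a b. D i (\<phi> a * b) = \<phi> a * D i b) \<and>
          cont_map NB NB (D i)) \<and>
     D 0 = id \<and>
     (\<forall>i b b'. D i (b * b') = (\<Sum>j\<le>i. D j b * D (i - j) b')) \<and>
     (\<forall>i j. D i \<circ> D j = (\<lambda>b. of_nat ((i + j) choose i) * D (i + j) b))"

definition top_integrable :: "(nat \<Rightarrow> 'b::comm_ring_1 set) \<Rightarrow> (nat \<Rightarrow> 'b \<Rightarrow> 'b) \<Rightarrow> bool" where
  "top_integrable NB D \<longleftrightarrow>
     (\<forall>b. \<forall>J'\<in>open_ideals NB. \<exists>J\<in>open_ideals NB. \<exists>n0. \<forall>n\<ge>n0. \<forall>x\<in>J. D n (b + x) \<in> J')"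

end

theory Submission
  imports Defs
begin

lemma ideal_parts:
  assumes "is_ideal J"
  shows "0 \<in> J" "\<And>x y. x \<in> J \<Longrightarrow> y \<in> J \<Longrightarrow> x + y \<in> J"
    "\<And>r x. x \<in> J \<Longrightarrow> r * x \<in> J"
proof -
  have h: "0 \<in> J \<and> (\<forall>x\<in>J. \<forall>y\<in>J. x + y \<in> J) \<and> (\<forall>r. \<forall>x\<in>J. r * x \<in> J)"
    using assms unfolding is_ideal_def .
  show "0 \<in> J" using h by (elim conjE)
  show "\<And>x y. x \<in> J \<Longrightarrow> y \<in> J \<Longrightarrow> x + y \<in> J" using h by (elim conjE) simp
  show "\<And>r x. x \<in> J \<Longrightarrow> r * x \<in> J" using h by (elim conjE) simp
qed

lemma ideal_add: "is_ideal J \<Longrightarrow> x \<in> J \<Longrightarrow> y \<in> J \<Longrightarrow> x + y \<in> J"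
  by (rule ideal_parts(2))

lemma ideal_zero: "is_ideal J \<Longrightarrow> 0 \<in> J"
  by (rule ideal_parts(1))

lemma ideal_diff: "is_ideal J \<Longrightarrow> x \<in> J \<Longrightarrow> y \<in> J \<Longrightarrow> x - y \<in> J"
proof -
  assume J: "is_ideal J" "x \<in> J" "y \<in> J"
  have "(-1) * y \<in> J" by (rule ideal_parts(3)[OF J(1) J(3)])
  then have "x + (-1) * y \<in> J" by (rule ideal_parts(2)[OF J(1) J(2)])
  then show "x - y \<in> J" by simp
qed

lemma ideal_inter: "is_ideal J1 \<Longrightarrow> is_ideal J2 \<Longrightarrow> is_ideal (J1 \<inter> J2)"
  unfolding is_ideal_def
  apply (intro conjI ballI allI)
      apply (simp_all add: is_ideal_def)
  done

lemma open_inter: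
  assumes "fund_system N" "J1 \<in> open_ideals N" "J2 \<in> open_ideals N"
  shows "J1 \<inter> J2 \<in> open_ideals N"
proof -
  obtain m where m: "N m \<subseteq> J1" using assms(2) unfolding open_ideals_def by (auto simp del: Int_subset_iff)
  obtain n where n: "N n \<subseteq> J2" using assms(3) unfolding open_ideals_def by (auto simp del: Int_subset_iff)
  obtain k where "N k \<subseteq> N m \<inter> N n" using assms(1) unfolding fund_system_def by (elim conjE) blast
  then have "N k \<subseteq> J1 \<inter> J2" using m n by auto
  moreover have "is_ideal (J1 \<inter> J2)"
    using assms(2,3) unfolding open_ideals_def by (intro ideal_inter) simp_all
  ultimately show ?thesis unfolding open_ideals_def mem_Collect_eq by (intro conjI exI[of _ k])
qed

lemma open_finite_inter:
  fixes n :: nat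
  assumes "fund_system N" "J0 \<in> open_ideals N" "\<And>i. K i \<in> open_ideals N"
  shows "\<exists>J\<in>open_ideals N. J \<subseteq> J0 \<and> (\<forall>i<n. J \<subseteq> K i)"
proof (induction n)
  case 0
  show ?case using assms(2) by (intro bexI[of _ J0]) simp_all
next
  case (Suc n)
  then obtain J where J: "J \<in> open_ideals N" "J \<subseteq> J0" "\<forall>i<n. J \<subseteq> K i" by (elim bexE conjE)
  have "J \<inter> K n \<in> open_ideals N" using open_inter[OF assms(1) J(1) assms(3)] .
  moreover have "\<forall>i<Suc n. J \<inter> K n \<subseteq> K i" using J(3) less_Suc_eq by auto
  moreover have "J \<inter> K n \<subseteq> J0" using J(2) by auto
  ultimately show ?case by (intro bexI[of _ "J \<inter> K n"] conjI)
qed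

lemma open_is_ideal: "J \<in> open_ideals N \<Longrightarrow> is_ideal J"
  unfolding open_ideals_def by blast

lemma forward:
  assumes "is_Ga_action NA NB \<phi> \<mu>"
  shows "iter_higher_deriv NB \<phi> (\<lambda>i b. \<mu> b i) \<and> top_integrable NB (\<lambda>i b. \<mu> b i)"
proof -
  note A = assms[unfolded is_Ga_action_def]
  have A3: "\<forall>b b'. \<mu> (b + b') = ser_add (\<mu> b) (\<mu> b')" using A by (elim conjE) assumption
  have A4: "\<forall>b b'. \<mu> (b * b') = ser_mult (\<mu> b) (\<mu> b')" using A by (elim conjE) assumption
  have A5: "\<forall>a. \<mu> (\<phi> a) = ser_const (\<phi> a)" using A by (elim conjE) assumption
  have A7: "\<forall>b. id_times_comor \<mu> (\<mu> b) = add_times_id (\<mu> b)" using A by (elim conjE) assumption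
  have A8: "\<forall>b. eps_times_id (\<mu> b) = b" using A by (elim conjE) assumption
  have add: "\<And>b b' i. \<mu> (b + b') i = \<mu> b i + \<mu> b' i" using A3 by (simp add: ser_add_def)
  have mult: "\<And>b b' i. \<mu> (b * b') i = (\<Sum>j\<le>i. \<mu> b j * \<mu> b' (i - j))" using A4 by (simp add: ser_mult_def)
  have phi: "\<And>a i. \<mu> (\<phi> a) i = ser_const (\<phi> a) i" using A5 by simp
  have eps: "\<And>b. \<mu> b 0 = b" using A8 by (simp add: eps_times_id_def)
  have comp: "\<And>b i j. \<mu> (\<mu> b i) j = of_nat ((i + j) choose i) * \<mu> b (i + j)"
  proof -
    fix b i j
    have "id_times_comor \<mu> (\<mu> b) (i, j) = add_times_id (\<mu> b) (i, j)" using A7 by simp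
    then show "\<mu> (\<mu> b i) j = of_nat ((i + j) choose i) * \<mu> b (i + j)"
      unfolding id_times_comor_def add_times_id_def by simp
  qed
  have cont: "cont_to_series NB \<mu>" using A by (elim conjE) assumption
  have restr: "\<forall>b. restricted NB (\<mu> b)" using A by (elim conjE) assumption
  have lin: "\<mu> (\<phi> a * b) i = \<phi> a * \<mu> b i" for a b i
  proof -
    have "\<mu> (\<phi> a * b) i = (\<Sum>j\<le>i. ser_const (\<phi> a) j * \<mu> b (i - j))" using mult phi by simp
    also have "\<dots> = (\<Sum>j\<in>{0}. ser_const (\<phi> a) j * \<mu> b (i - j))"
      by (rule sum.mono_neutral_right) (auto simp: ser_const_def)
    finally show ?thesis by (simp add: ser_const_def)
  qed
  have cont': "\<And>b J. J \<in> open_ideals NB \<Longrightarrow> \<exists>J'\<in>open_ideals NB. \<forall>x\<in>J'. \<forall>i. \<mu> (b + x) i - \<mu> b i \<in> J"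
    using cont unfolding cont_to_series_def by simp
  have cm: "cont_map NB NB (\<lambda>b. \<mu> b i)" for i
    unfolding cont_map_def
  proof (intro allI ballI)
    fix a J assume J: "J \<in> open_ideals NB"
    obtain J' where J': "J' \<in> open_ideals NB" "\<forall>x\<in>J'. \<forall>i. \<mu> (a + x) i - \<mu> a i \<in> J"
      using cont'[of J a, OF J] by blast
    have "\<forall>x\<in>J'. \<mu> (a + x) i - \<mu> a i \<in> J" using J'(2) by simp
    then show "\<exists>J'\<in>open_ideals NB. \<forall>x\<in>J'. \<mu> (a + x) i - \<mu> a i \<in> J"
      using J'(1) by (intro bexI[of _ J'])
  qed
  have D0: "(\<lambda>b. \<mu> b 0) = id" using eps by auto
  have comp2: "(\<lambda>b. \<mu> b i) \<circ> (\<lambda>b. \<mu> b j) = (\<lambda>b. of_nat ((i + j) choose i) * \<mu> b (i + j))" for i j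
  proof
    fix b
    have "\<mu> (\<mu> b j) i = of_nat ((j + i) choose j) * \<mu> b (j + i)" by (rule comp)
    then show "((\<lambda>b. \<mu> b i) \<circ> (\<lambda>b. \<mu> b j)) b = of_nat ((i + j) choose i) * \<mu> b (i + j)"
      by (simp add: add.commute binomial_symmetric[of i "i+j"])
  qed
  have ti: "top_integrable NB (\<lambda>i b. \<mu> b i)"
    unfolding top_integrable_def
  proof (intro allI ballI)
    fix b J'
    assume J': "J' \<in> open_ideals NB"
    have "finite {i. \<mu> b i \<notin> J'}" using restr J' unfolding restricted_def by simp
    then obtain k where k: "\<forall>i\<in>{i. \<mu> b i \<notin> J'}. i < k" unfolding finite_nat_set_iff_bounded by (elim exE)
    obtain J where J: "J \<in> open_ideals NB" "\<forall>x\<in>J. \<forall>i. \<mu> (b + x) i - \<mu> b i \<in> J'"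
      using cont'[of J' b, OF J'] by blast
    have "\<forall>n\<ge>k. \<forall>x\<in>J. \<mu> (b + x) n \<in> J'"
    proof (intro allI impI ballI)
      fix n x assume "k \<le> n" "x \<in> J"
      then have "\<mu> b n \<in> J'" using k by auto
      moreover have "\<mu> (b + x) n - \<mu> b n \<in> J'" using J(2) \<open>x \<in> J\<close> by simp
      ultimately have "(\<mu> (b + x) n - \<mu> b n) + \<mu> b n \<in> J'"
        using ideal_add[OF open_is_ideal[OF J']] by presburger
      then show "\<mu> (b + x) n \<in> J'" by simp
    qed
    then show "\<exists>J\<in>open_ideals NB. \<exists>n0. \<forall>n\<ge>n0. \<forall>x\<in>J. \<mu> (b + x) n \<in> J'"
      using J(1) by (intro bexI[of _ J] exI[of _ k])
  qed
  have "iter_higher_deriv NB \<phi> (\<lambda>i b. \<mu> b i)"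
    unfolding iter_higher_deriv_def
  proof (intro conjI allI)
    show "\<mu> (b + b') i = \<mu> b i + \<mu> b' i" for i b b' by (rule add)
    show "\<mu> (\<phi> a * b) i = \<phi> a * \<mu> b i" for i a b by (rule lin)
    show "cont_map NB NB (\<lambda>b. \<mu> b i)" for i by (rule cm)
    show "(\<lambda>b. \<mu> b 0) = id" by (rule D0)
    show "\<mu> (b * b') i = (\<Sum>j\<le>i. \<mu> b j * \<mu> b' (i - j))" for i b b' by (rule mult)
    show "(\<lambda>b. \<mu> b i) \<circ> (\<lambda>b. \<mu> b j) = (\<lambda>b. of_nat ((i + j) choose i) * \<mu> b (i + j))" for i j
      by (rule comp2)
  qed
  then show ?thesis using ti by simp
qed

lemma D_one:
  assumes "\<forall>i b b'. D i (b * b') = (\<Sum>j\<le>i. D j b * D (i - j) b')" "D 0 = id"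
  shows "D i (1::'b::comm_ring_1) = ser_const 1 i"
proof (induction i rule: less_induct)
  case (less i)
  show ?case
  proof (cases "i = 0")
    case True then show ?thesis using assms(2) by (simp add: ser_const_def)
  next
    case False
    have "D i 1 = (\<Sum>j\<le>i. D j 1 * D (i - j) 1)" using assms(1)[rule_format, of i 1 1] by simp
    also have "\<dots> = (\<Sum>j\<in>{0, i}. D j 1 * D (i - j) 1)"
    proof (rule sum.mono_neutral_right)
      show "\<forall>j\<in>{..i} - {0, i}. D j 1 * D (i - j) 1 = 0"
        using less False by (auto simp: ser_const_def)
    qed auto
    also have "\<dots> = D i 1 + D i 1" using False assms(2) by simp
    finally have "D i 1 = 0" by simp
    then show ?thesis using False by (simp add: ser_const_def)
  qed
qed

lemma backward:
  assumes NB: "complete_ring NB" and ph: "is_ring_hom \<phi>"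
    and D: "iter_higher_deriv NB \<phi> D" and T: "top_integrable NB D"
  shows "is_Ga_action NA NB \<phi> (\<lambda>b i. D i b)"
proof -
  have fs: "fund_system NB" using NB unfolding complete_ring_def by (elim conjE)
  have T': "\<And>b J'. J' \<in> open_ideals NB \<Longrightarrow> \<exists>J\<in>open_ideals NB. \<exists>n0. \<forall>n\<ge>n0. \<forall>x\<in>J. D n (b + x) \<in> J'"
    using T unfolding top_integrable_def by simp
  note DD = D[unfolded iter_higher_deriv_def]
  have DI: "\<forall>i. (\<forall>b b'. D i (b + b') = D i b + D i b') \<and>
          (\<forall>a b. D i (\<phi> a * b) = \<phi> a * D i b) \<and> cont_map NB NB (D i)"
    using DD by (elim conjE) assumption
  have D0: "D 0 = id" using DD by (elim conjE) assumption
  have mult: "\<forall>i b b'. D i (b * b') = (\<Sum>j\<le>i. D j b * D (i - j) b')" using DD by (elim conjE) assumption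
  have compa: "\<forall>i j. D i \<circ> D j = (\<lambda>b. of_nat ((i + j) choose i) * D (i + j) b)" using DD by (elim conjE) assumption
  have add: "\<And>i b b'. D i (b + b') = D i b + D i b'" using DI by simp
  have lin: "\<And>i a b. D i (\<phi> a * b) = \<phi> a * D i b" using DI by simp
  have cm: "\<And>i. cont_map NB NB (D i)" using DI by simp
  have comp: "\<And>i j. D i \<circ> D j = (\<lambda>b. of_nat ((i + j) choose i) * D (i + j) b)" using compa by simp
  have one: "\<And>i. D i 1 = ser_const 1 i" using D_one[OF mult D0] .
  have z: "D i 0 = 0" for i using add[of i 0 0] by simp
  have restr: "restricted NB (\<lambda>i. D i b)" for b
    unfolding restricted_def
  proof
    fix J assume J: "J \<in> open_ideals NB"
    obtain J0 n0 where J0: "J0 \<in> open_ideals NB" "\<forall>n\<ge>n0. \<forall>x\<in>J0. D n (b + x) \<in> J"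
      using T'[of J b, OF J] by blast
    have "0 \<in> J0" by (rule ideal_zero[OF open_is_ideal[OF J0(1)]])
    have "\<forall>n\<ge>n0. D n b \<in> J"
    proof (intro allI impI)
      fix n assume "n0 \<le> n"
      then have "D n (b + 0) \<in> J" using J0(2) \<open>0 \<in> J0\<close> by blast
      then show "D n b \<in> J" by simp
    qed
    then have "{i. D i b \<notin> J} \<subseteq> {..<n0}" by (auto simp: not_less[symmetric])
    then show "finite {i. D i b \<notin> J}" by (rule finite_subset) simp
  qed
  have phi: "(\<lambda>i. D i (\<phi> a)) = ser_const (\<phi> a)" for a
  proof
    fix i
    have "D i (\<phi> a * 1) = \<phi> a * D i 1" by (rule lin)
    then have "D i (\<phi> a) = \<phi> a * ser_const 1 i" using one by simp
    then show "D i (\<phi> a) = ser_const (\<phi> a) i" by (simp add: ser_const_def)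
  qed
  have cont: "cont_to_series NB (\<lambda>b i. D i b)"
    unfolding cont_to_series_def
  proof (intro allI ballI)
    fix b J assume J: "J \<in> open_ideals NB"
    obtain J0 n0 where J0: "J0 \<in> open_ideals NB" "\<forall>n\<ge>n0. \<forall>x\<in>J0. D n (0 + x) \<in> J"
      using T'[of J 0, OF J] by blast
    have ex: "\<forall>i. \<exists>K. K \<in> open_ideals NB \<and> (\<forall>x\<in>K. D i (0 + x) - D i 0 \<in> J)"
    proof
      fix i
      have "\<exists>K\<in>open_ideals NB. \<forall>x\<in>K. D i (0 + x) - D i 0 \<in> J"
        by (rule cm[of i, unfolded cont_map_def, rule_format, OF J])
      then show "\<exists>K. K \<in> open_ideals NB \<and> (\<forall>x\<in>K. D i (0 + x) - D i 0 \<in> J)"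
        by (simp only: Bex_def)
    qed
    obtain K where KK: "\<forall>i. K i \<in> open_ideals NB \<and> (\<forall>x\<in>K i. D i (0 + x) - D i 0 \<in> J)"
      using choice[OF ex] by (elim exE)
    have K: "\<And>i. K i \<in> open_ideals NB" "\<And>i. \<forall>x\<in>K i. D i (0 + x) - D i 0 \<in> J"
      using KK by simp_all
    obtain J' where J': "J' \<in> open_ideals NB" "J' \<subseteq> J0" "\<forall>i<n0. J' \<subseteq> K i"
      using open_finite_inter[where K=K and n=n0, OF fs J0(1) K(1)] by blast
    have "\<forall>x\<in>J'. \<forall>i. D i (b + x) - D i b \<in> J"
    proof (intro ballI allI)
      fix x i assume x: "x \<in> J'"
      have "D i x \<in> J"
      proof (cases "i < n0")
        case True
        then have "x \<in> K i" using J'(3) x by auto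
        then have "D i (0 + x) - D i 0 \<in> J" using K(2)[of i] by simp
        then show ?thesis using z by simp
      next
        case False
        then have "x \<in> J0" "n0 \<le> i" using J'(2) x by auto
        then show ?thesis using J0(2) by simp
      qed
      then show "D i (b + x) - D i b \<in> J" using add by simp
    qed
    then show "\<exists>J'\<in>open_ideals NB. \<forall>x\<in>J'. \<forall>i. D i (b + x) - D i b \<in> J"
      using J'(1) by (intro bexI[of _ J'])
  qed
  have idc: "id_times_comor (\<lambda>b i. D i b) (\<lambda>i. D i b) = add_times_id (\<lambda>i. D i b)" for b
  proof
    fix p :: "nat \<times> nat"
    obtain i j where p: "p = (i, j)" by fastforce
    have "(D j \<circ> D i) b = of_nat ((j + i) choose j) * D (j + i) b" using comp[of j i] by simp
    moreover have "(j + i) choose j = (i + j) choose i"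
      using binomial_symmetric[of i "i+j"] by (simp add: add.commute)
    ultimately have "D j (D i b) = of_nat ((i + j) choose i) * D (i + j) b" by (simp add: add.commute)
    then show "id_times_comor (\<lambda>b i. D i b) (\<lambda>i. D i b) p = add_times_id (\<lambda>i. D i b) p"
      unfolding p id_times_comor_def add_times_id_def by simp
  qed
  have "(\<lambda>i. D i 1) = ser_const 1" by (rule ext) (rule one)
  moreover have "\<forall>b b'. (\<lambda>i. D i (b + b')) = ser_add (\<lambda>i. D i b) (\<lambda>i. D i b')"
    using add unfolding ser_add_def by simp
  moreover have "\<forall>b b'. (\<lambda>i. D i (b * b')) = ser_mult (\<lambda>i. D i b) (\<lambda>i. D i b')"
    using mult unfolding ser_mult_def by simp
  moreover have "\<forall>b. eps_times_id (\<lambda>i. D i b) = b" using D0 unfolding eps_times_id_def by simp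
  moreover have "\<forall>a. (\<lambda>i. D i (\<phi> a)) = ser_const (\<phi> a)" using phi by simp
  moreover have "\<forall>b. restricted NB (\<lambda>i. D i b)" using restr by simp
  moreover have "\<forall>b. id_times_comor (\<lambda>b i. D i b) (\<lambda>i. D i b) = add_times_id (\<lambda>i. D i b)" using idc by simp
  ultimately show ?thesis unfolding is_Ga_action_def using cont by (intro conjI) assumption+
qed

theorem theorem3p6:
  fixes NA :: "nat \<Rightarrow> 'a::comm_ring_1 set" and NB :: "nat \<Rightarrow> 'b::comm_ring_1 set"
    and \<phi> :: "'a \<Rightarrow> 'b"
  assumes "complete_ring NA" and "complete_ring NB"
    and "is_ring_hom \<phi>" and "cont_map NA NB \<phi>"
  shows "bij_betw (\<lambda>\<mu> i b. \<mu> b i)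
           {\<mu>. is_Ga_action NA NB \<phi> \<mu>}
           {D. iter_higher_deriv NB \<phi> D \<and> top_integrable NB D}"
proof (rule bij_betw_imageI)
  show "inj_on (\<lambda>\<mu> i b. \<mu> b i) {\<mu>. is_Ga_action NA NB \<phi> \<mu>}"
    by (rule inj_onI) (metis ext)
  show "(\<lambda>\<mu> i b. \<mu> b i) ` {\<mu>. is_Ga_action NA NB \<phi> \<mu>} = {D. iter_higher_deriv NB \<phi> D \<and> top_integrable NB D}"
  proof
    show "(\<lambda>\<mu> i b. \<mu> b i) ` {\<mu>. is_Ga_action NA NB \<phi> \<mu>} \<subseteq> {D. iter_higher_deriv NB \<phi> D \<and> top_integrable NB D}"
      using forward by blast
  next
    show "{D. iter_higher_deriv NB \<phi> D \<and> top_integrable NB D} \<subseteq> (\<lambda>\<mu> i b. \<mu> b i) ` {\<mu>. is_Ga_action NA NB \<phi> \<mu>}"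
    proof
      fix D assume "D \<in> {D. iter_higher_deriv NB \<phi> D \<and> top_integrable NB D}"
      then have "is_Ga_action NA NB \<phi> (\<lambda>b i. D i b)" using backward[OF assms(2,3)] by blast
      then show "D \<in> (\<lambda>\<mu> i b. \<mu> b i) ` {\<mu>. is_Ga_action NA NB \<phi> \<mu>}"
        by (intro image_eqI[where x="\<lambda>b i. D i b"]) auto
    qed
  qed
qed

end
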